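(* Let $(\hat A,\hat B)$ satisfy $\max\{\|\hat A-A_\star\|,\|\hat B-B_\star\|\}\le\varepsilon_\mathrm{m}$ and let $F\in\mathbb{S}^n_+$ satisfy $\|F-P_\star\|\le\varepsilon$. Assume $m\le n$, $R\succeq I$, $Q\succeq I$, $(A_\star,B_\star)$ stabilizable, $\|A_\star\|,\|B_\star\|,\|P_\star\|\le\Upsilon_\star$ with $\Upsilon_\star\ge\max\{1,\varepsilon_\mathrm{m}\}$, and $\Upsilon_\star\ge\varepsilon$. Then $K=\mathcal{K}_{\hat A,\hat B}(F)$ satisfies $$\|K-K_\star\|\le\frac{\Upsilon_\star^2(\sqrt{\|P_\star\|}+1)(3\varepsilon_\mathrm{m}+4\varepsilon)}{\underline{\sigma}(R)}.$$
   Context: $A_\star\in\mathbb{R}^{n\times n}$, $B_\star\in\mathbb{R}^{n\times m}$; weights $Q\in\mathbb{S}^n_+$, $R\in\mathbb{S}^m_{++}$; $\|\cdot\|$ spectral norm; $\underline{\sigma}$ smallest singular value. $S_B=BR^{-1}B^\top$; Riccati map $\mathcal{R}_{A,B}(P)=A^\top P(I+S_BP)^{-1}A+Q$. $\mathcal{K}_{A,B}(F)=(R+B^\top FB)^{-1}B^\top FA$. $P_\star$ is the unique positive definite solution of $P_\star=\mathcal{R}_{A_\star,B_\star}(P_\star)$, and $K_\star=\mathcal{K}_{A_\star,B_\star}(P_\star)$. *)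

theory Defs
  imports "HOL-Analysis.Analysis"
begin

definition spec_norm :: "real^'m^'n \<Rightarrow> real" where
  "spec_norm M = onorm (\<lambda>x. M *v x)"

definition sigma_min :: "real^'n^'n \<Rightarrow> real" where
  "sigma_min M = Inf {norm (M *v x) | x. norm x = 1}"

definition sym_mat :: "real^'n^'n \<Rightarrow> bool" where
  "sym_mat M \<longleftrightarrow> transpose M = M"

definition psd :: "real^'n^'n \<Rightarrow> bool" where
  "psd M \<longleftrightarrow> sym_mat M \<and> (\<forall>x. 0 \<le> x \<bullet> (M *v x))"

definition pd :: "real^'n^'n \<Rightarrow> bool" where
  "pd M \<longleftrightarrow> sym_mat M \<and> (\<forall>x. x \<noteq> 0 \<longrightarrow> 0 < x \<bullet> (M *v x))"

definition cmat :: "real^'n^'n \<Rightarrow> complex^'n^'n" where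
  "cmat M = (\<chi> i j. complex_of_real (M $ i $ j))"

definition is_eigenvalue :: "real^'n^'n \<Rightarrow> complex \<Rightarrow> bool" where
  "is_eigenvalue M z \<longleftrightarrow> (\<exists>v. v \<noteq> 0 \<and> cmat M *v v = z *s v)"

definition schur_stable :: "real^'n^'n \<Rightarrow> bool" where
  "schur_stable M \<longleftrightarrow> (\<forall>z. is_eigenvalue M z \<longrightarrow> cmod z < 1)"

definition stabilizable :: "real^'n^'n \<Rightarrow> real^'m^'n \<Rightarrow> bool" where
  "stabilizable A B \<longleftrightarrow> (\<exists>K :: real^'n^'m. schur_stable (A - B ** K))"

definition riccati :: "real^'n^'n \<Rightarrow> real^'m^'m \<Rightarrow> real^'n^'n \<Rightarrow> real^'m^'n \<Rightarrow> real^'n^'n \<Rightarrow> real^'n^'n" where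
  "riccati Q R A B P =
     transpose A ** P ** matrix_inv (mat 1 + (B ** matrix_inv R ** transpose B) ** P) ** A + Q"

definition gain :: "real^'m^'m \<Rightarrow> real^'n^'n \<Rightarrow> real^'m^'n \<Rightarrow> real^'n^'n \<Rightarrow> real^'n^'m" where
  "gain R A B F = matrix_inv (R + transpose B ** F ** B) ** transpose B ** F ** A"

end

theory Submission
  imports Defs
begin


lemma dot_transpose: "(x::real^'a) \<bullet> (transpose A *v y) = (A *v x) \<bullet> (y::real^'b)"
  by (metis dot_lmul_matrix inner_commute transpose_matrix_vector)

lemma dot_vmul: "(x::real^'a) \<bullet> (y v* A) = (A *v x) \<bullet> (y::real^'b)"
  using dot_transpose[of x A y] by simp

lemma dot_le0: "(x::real^'a) \<bullet> x \<le> 0 \<Longrightarrow> x = 0"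
  by (metis inner_eq_zero_iff inner_ge_zero order_antisym)

lemma spec_bound: "norm (A *v x) \<le> spec_norm A * norm (x::real^'a)"
  unfolding spec_norm_def by (rule onorm) simp

lemma spec_nonneg: "0 \<le> spec_norm (A::real^'a^'b)"
  unfolding spec_norm_def by (rule onorm_pos_le) simp

lemma transpose_bound: "norm (transpose A *v y) \<le> spec_norm (A::real^'a^'b) * norm y"
proof -
  let ?z = "transpose A *v y"
  have "norm ?z ^ 2 = ?z \<bullet> ?z" by (simp add: power2_norm_eq_inner)
  also have "\<dots> = (A *v ?z) \<bullet> y" by (rule dot_transpose)
  also have "\<dots> \<le> norm (A *v ?z) * norm y" by (rule norm_cauchy_schwarz)
  also have "\<dots> \<le> spec_norm A * norm ?z * norm y"
    by (simp add: mult_right_mono spec_bound)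
  finally have *: "norm ?z * norm ?z \<le> (spec_norm A * norm y) * norm ?z"
    by (simp add: power2_eq_square algebra_simps)
  show ?thesis
  proof (cases "norm ?z = 0")
    case True then show ?thesis using spec_nonneg[of A] by simp
  next
    case False then have "norm ?z > 0" by simp
    with * show ?thesis by simp
  qed
qed

lemma transpose_diff: "transpose (X - Y) = transpose X - transpose (Y::'a::ring_1^'b^'c)"
  by (simp add: transpose_def vec_eq_iff)

lemma sym_dot: "sym_mat A \<Longrightarrow> (x::real^'a) \<bullet> (A *v y) = y \<bullet> (A *v x)"
  by (metis dot_transpose inner_commute sym_mat_def)

lemma inv_of_inj:
  fixes A :: "real^'a^'a"
  assumes "\<And>x. A *v x = 0 \<Longrightarrow> x = 0"
  shows "matrix_inv A *v (A *v x) = x" "A *v (matrix_inv A *v x) = x"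
proof -
  have "inj ((*v) A)"
  proof (rule injI)
    fix x y assume "A *v x = A *v y"
    then have "A *v (x - y) = 0" by (simp add: matrix_vector_mult_diff_distrib)
    then have "x - y = 0" by (rule assms)
    then show "x = y" by simp
  qed
  then obtain B where "B ** A = mat 1" using matrix_left_invertible_injective by blast
  then have "invertible A" using invertible_left_inverse by blast
  then have "A ** matrix_inv A = mat 1 \<and> matrix_inv A ** A = mat 1"
    unfolding invertible_def matrix_inv_def by (rule someI_ex)
  then show "matrix_inv A *v (A *v x) = x" "A *v (matrix_inv A *v x) = x"
    by (metis matrix_vector_mul_assoc matrix_vector_mul_lid)+
qed

lemma psd_I: "psd (R - mat 1) \<Longrightarrow> (x::real^'a) \<bullet> x \<le> x \<bullet> (R *v x)"
  unfolding psd_def by (drule conjunct2, drule spec[of _ x]) (simp add: matrix_vector_mult_diff_rdistrib inner_diff_right)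

lemma pd_nonneg: "pd P \<Longrightarrow> 0 \<le> (x::real^'a) \<bullet> (P *v x)"
  unfolding pd_def by (cases "x = 0") auto

lemma psd_nonneg: "psd P \<Longrightarrow> 0 \<le> (x::real^'a) \<bullet> (P *v x)"
  unfolding psd_def by auto



lemma lin_coeff_zero:
  fixes a c :: real
  assumes "\<And>t. 0 \<le> 2 * t * c + t^2 * a" "0 \<le> a"
  shows "c = 0"
proof (rule ccontr)
  assume "c \<noteq> 0"
  define t where "t = - c / (a + 1)"
  have ap: "a + 1 > 0" using assms(2) by simp
  have "(2 * t * c + t^2 * a) * (a+1)^2 = c^2 * (a - 2 * (a+1))"
  proof -
    have h: "t * (a+1) = - c" using ap by (simp add: t_def)
    show ?thesis using h by algebra
  qed
  also have "\<dots> < 0"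
    using assms(2) \<open>c \<noteq> 0\<close> by (intro mult_pos_neg) auto
  finally have "2 * t * c + t^2 * a < 0" using ap
    by (metis mult_nonneg_nonneg not_less zero_le_power2)
  then show False using assms(1)[of t] by simp
qed

lemma sigma_min_props:
  fixes R :: "real^'a^'a"
  assumes "pd R" "psd (R - mat 1)"
  shows "sigma_min R * norm x ^ 2 \<le> x \<bullet> (R *v x)" "1 \<le> sigma_min R"
proof -
  have symR: "sym_mat R" using assms(1) by (simp add: pd_def)
  let ?S = "sphere (0::real^'a) 1"
  have "continuous_on ?S (\<lambda>x. x \<bullet> (R *v x))"
    by (intro continuous_intros linear_continuous_on) simp
  moreover have "axis undefined (1::real) \<in> ?S" by simp
  then have "?S \<noteq> {}" by blast
  ultimately obtain v0 where v0: "v0 \<in> ?S" "\<And>y. y \<in> ?S \<Longrightarrow> v0 \<bullet> (R *v v0) \<le> y \<bullet> (R *v y)"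
    using continuous_attains_inf[OF compact_sphere] by blast
  define l where "l = v0 \<bullet> (R *v v0)"
  have nv0: "norm v0 = 1" using v0(1) by simp
  have lb: "l * norm x ^ 2 \<le> x \<bullet> (R *v x)" for x
  proof (cases "x = 0")
    case True then show ?thesis by simp
  next
    case False
    let ?y = "(1 / norm x) *\<^sub>R x"
    have "?y \<in> ?S" using False by simp
    then have "l \<le> ?y \<bullet> (R *v ?y)" using v0(2) l_def by blast
    also have "\<dots> = (x \<bullet> (R *v x)) / norm x ^ 2"
      by (simp add: matrix_vector_mult_scaleR power2_eq_square)
    finally show ?thesis using False by (simp add: pos_le_divide_eq)
  qed
  define D where "D y = R *v y - l *\<^sub>R y" for y
  have Dnn: "0 \<le> y \<bullet> D y" for y
    using lb[of y] by (simp add: D_def inner_diff_right power2_norm_eq_inner)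
  have D0: "v0 \<bullet> D v0 = 0"
    using nv0 by (simp add: D_def inner_diff_right l_def power2_norm_eq_inner[symmetric])
  have Dlin: "D (a + t *\<^sub>R b) = D a + t *\<^sub>R D b" for a b t
    by (simp add: D_def algebra_simps)
  have Dsym: "a \<bullet> D b = b \<bullet> D a" for a b
    by (simp add: D_def inner_diff_right sym_dot[OF symR, of a b] inner_commute)
  have "D v0 \<bullet> D v0 = 0"
  proof (rule lin_coeff_zero[where a = "D v0 \<bullet> D (D v0)"])
    fix t
    have "0 \<le> (v0 + t *\<^sub>R D v0) \<bullet> D (v0 + t *\<^sub>R D v0)" by (rule Dnn)
    also have "\<dots> = v0 \<bullet> D v0 + t * (v0 \<bullet> D (D v0)) + t * (D v0 \<bullet> D v0) + t^2 * (D v0 \<bullet> D (D v0))"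
      by (simp add: Dlin inner_add_left inner_add_right power2_eq_square algebra_simps)
    also have "\<dots> = 2 * t * (D v0 \<bullet> D v0) + t^2 * (D v0 \<bullet> D (D v0))"
      using D0 Dsym[of v0 "D v0"] by simp
    finally show "0 \<le> 2 * t * (D v0 \<bullet> D v0) + t^2 * (D v0 \<bullet> D (D v0))" .
  qed (rule Dnn)
  then have "D v0 = 0" by simp
  then have Rv0: "R *v v0 = l *\<^sub>R v0" by (simp add: D_def)
  have "1 \<le> l" using psd_I[OF assms(2), of v0] nv0 by (simp add: l_def power2_norm_eq_inner[symmetric])
  have "sigma_min R \<le> norm (R *v v0)"
    unfolding sigma_min_def
  proof (rule cInf_lower)
    show "bdd_below {norm (R *v x) |x. norm x = 1}"
      by (rule bdd_belowI[of _ 0]) auto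
  qed (use nv0 in auto)
  also have "\<dots> = l" using Rv0 nv0 \<open>1 \<le> l\<close> by simp
  finally have sl: "sigma_min R \<le> l" .
  show "sigma_min R * norm x ^ 2 \<le> x \<bullet> (R *v x)"
    using lb[of x] sl by (meson dual_order.trans mult_right_mono zero_le_power2)
  show "1 \<le> sigma_min R"
    unfolding sigma_min_def
  proof (rule cInf_greatest)
    show "{norm (R *v x) |x. norm x = 1} \<noteq> {}" using norm_axis_1 by blast
  next
    fix y assume "y \<in> {norm (R *v x) |x. norm x = 1}"
    then obtain x where x: "norm x = 1" "y = norm (R *v x)" by blast
    have "1 = x \<bullet> x" using x(1) by (simp add: power2_norm_eq_inner[symmetric])
    also have "\<dots> \<le> x \<bullet> (R *v x)" by (rule psd_I[OF assms(2)])
    also have "\<dots> \<le> norm x * norm (R *v x)" by (rule norm_cauchy_schwarz)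
    finally show "1 \<le> y" using x by simp
  qed
qed



lemma final_ineq:
  fixes p U e em s :: real
  assumes "0 \<le> p" "p \<le> U" "0 \<le> e" "e \<le> U" "0 \<le> em" "em \<le> U" "1 \<le> U" "0 \<le> s"
  shows "em*(p+e)*(s+(em+em* s)) + U*e*(s+(em+em* s)) + U*p*(em+em* s) \<le> U^2*(s+1)*(3*em+4*e)"
proof -
  have U2: "U \<le> U^2" using assms(7) by (simp add: power2_eq_square)
  have pU: "p \<le> U^2" "em \<le> U^2" using assms U2 by linarith+
  have epU: "em*p \<le> U^2" "em*em \<le> U^2" "U*em \<le> U^2" "U*p \<le> U^2"
    using assms by (auto simp: power2_eq_square intro: mult_mono)
  have nn: "0 \<le> em* s" "0 \<le> e* s" "0 \<le> em*(1+s)" "0 \<le> e*(1+s)" using assms by auto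
  have i: "em*(p+e)*(s+(em+em* s)) + U*e*(s+(em+em* s)) + U*p*(em+em* s) =
    p*(em* s) + em*(e* s) + (em*p)*(em*(1+s)) + (em*em)*(e*(1+s)) + U*(e* s) + (U*em)*(e*(1+s)) + (U*p)*(em*(1+s))"
    by (simp add: algebra_simps)
  have b1: "p*(em* s) \<le> U^2*(em* s)" using pU nn by (intro mult_right_mono) auto
  have b2: "em*(e* s) \<le> U^2*(e* s)" using pU nn by (intro mult_right_mono) auto
  have b3: "(em*p)*(em*(1+s)) \<le> U^2*(em*(1+s))" using epU nn by (intro mult_right_mono) auto
  have b4: "(em*em)*(e*(1+s)) \<le> U^2*(e*(1+s))" using epU nn by (intro mult_right_mono) auto
  have b5: "U*(e* s) \<le> U^2*(e* s)" using U2 nn by (intro mult_right_mono) auto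
  have b6: "(U*em)*(e*(1+s)) \<le> U^2*(e*(1+s))" using epU nn by (intro mult_right_mono) auto
  have b7: "(U*p)*(em*(1+s)) \<le> U^2*(em*(1+s))" using epU nn by (intro mult_right_mono) auto
  have f: "U^2*(em* s) + U^2*(e* s) + U^2*(em*(1+s)) + U^2*(e*(1+s)) + U^2*(e* s) + U^2*(e*(1+s)) + U^2*(em*(1+s))
      = U^2*(s+1)*(3*em+4*e) - U^2*(em+2*e)"
    by (simp add: algebra_simps)
  have "0 \<le> U^2*(em+2*e)" using assms by simp
  then show ?thesis using i b1 b2 b3 b4 b5 b6 b7 f by linarith
qed

lemma sqb:
  fixes w :: "'a::real_normed_vector" and v :: "'b::real_normed_vector" and s :: real
  assumes "norm w ^ 2 \<le> s * s * norm v ^ 2" "0 \<le> s"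
  shows "norm w \<le> s * norm v"
proof -
  have e: "(s * norm v) ^ 2 = s * s * norm v ^ 2" by (simp add: power2_eq_square mult_ac)
  have "norm w ^ 2 \<le> (s * norm v) ^ 2" unfolding e by (rule assms(1))
  then show ?thesis by (rule power2_le_imp_le) (use assms(2) in simp)
qed



theorem lemma6:
  fixes A_star A_hat :: "real^'n^'n" and B_star B_hat :: "real^'m^'n"
    and Q P_star F :: "real^'n^'n" and R :: "real^'m^'m"
    and eps_m eps Ups :: real
  assumes "CARD('m) \<le> CARD('n)"
    and "psd Q" and "pd R"
    and "psd (Q - mat 1)" and "psd (R - mat 1)"
    and "stabilizable A_star B_star"
    and "pd P_star" and "P_star = riccati Q R A_star B_star P_star"
    and "max (spec_norm (A_hat - A_star)) (spec_norm (B_hat - B_star)) \<le> eps_m"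
    and "psd F" and "spec_norm (F - P_star) \<le> eps"
    and "spec_norm A_star \<le> Ups" and "spec_norm B_star \<le> Ups" and "spec_norm P_star \<le> Ups"
    and "Ups \<ge> max 1 eps_m" and "Ups \<ge> eps"
  shows "spec_norm (gain R A_hat B_hat F - gain R A_star B_star P_star)
    \<le> Ups\<^sup>2 * (sqrt (spec_norm P_star) + 1) * (3 * eps_m + 4 * eps) / sigma_min R"
proof -
  let ?A = A_star and ?B = B_star and ?P = P_star and ?Ah = A_hat and ?Bh = B_hat
  define M where "M = R + transpose ?B ** ?P ** ?B"
  define Mh where "Mh = R + transpose ?Bh ** F ** ?Bh"
  define K where "K = gain R ?A ?B ?P"
  define Kh where "Kh = gain R ?Ah ?Bh F"
  define Ri where "Ri = matrix_inv R"
  define X where "X = matrix_inv (mat 1 + (?B ** matrix_inv R ** transpose ?B) ** ?P)"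
  have Rpos: "x \<bullet> x \<le> x \<bullet> (R *v x)" for x using psd_I[OF assms(5)] .
  have Rnn: "0 \<le> x \<bullet> (R *v x)" for x using Rpos[of x] by (meson inner_ge_zero order_trans)
  have Pnn: "0 \<le> x \<bullet> (?P *v x)" for x using pd_nonneg[OF assms(7)] .
  have Fnn: "0 \<le> x \<bullet> (F *v x)" for x using psd_nonneg[OF assms(10)] .
  have Mv: "M *v x = R *v x + transpose ?B *v (?P *v (?B *v x))" for x
    by (simp add: M_def matrix_vector_mult_add_rdistrib matrix_vector_mul_assoc[symmetric])
  have Mhv: "Mh *v x = R *v x + transpose ?Bh *v (F *v (?Bh *v x))" for x
    by (simp add: Mh_def matrix_vector_mult_add_rdistrib matrix_vector_mul_assoc[symmetric])
  have Mq: "x \<bullet> x \<le> x \<bullet> (M *v x)" for x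
    using Rpos[of x] Pnn[of "?B *v x"] by (simp add: Mv inner_add_right dot_transpose dot_vmul)
  have Mhq: "x \<bullet> x \<le> x \<bullet> (Mh *v x)" for x
    using Rpos[of x] Fnn[of "?Bh *v x"] by (simp add: Mhv inner_add_right dot_transpose dot_vmul)
  have Minj: "M *v x = 0 \<Longrightarrow> x = 0" for x using Mq[of x] by (simp add: dot_le0)
  have Mhinj: "Mh *v x = 0 \<Longrightarrow> x = 0" for x using Mhq[of x] by (simp add: dot_le0)
  have Rinj: "R *v x = 0 \<Longrightarrow> x = 0" for x using Rpos[of x] by (simp add: dot_le0)
  note Mi = inv_of_inj[of M, OF Minj]
  note Mhi = inv_of_inj[of Mh, OF Mhinj]
  note Ri = inv_of_inj[of R, OF Rinj, folded Ri_def]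
  have Kv: "K *v v = matrix_inv M *v (transpose ?B *v (?P *v (?A *v v)))" for v
    by (simp add: K_def gain_def M_def matrix_vector_mul_assoc[symmetric])
  have Kv': "matrix_inv M *v ((?P *v (?A *v v)) v* ?B) = K *v v" for v
    using Kv[of v] by simp
  have Khv: "Kh *v v = matrix_inv Mh *v (transpose ?Bh *v (F *v (?Ah *v v)))" for v
    by (simp add: Kh_def gain_def Mh_def matrix_vector_mul_assoc[symmetric])
  have Iv: "(mat 1 + (?B ** matrix_inv R ** transpose ?B) ** ?P) *v y
      = y + ?B *v (Ri *v (transpose ?B *v (?P *v y)))" for y
    by (simp add: Ri_def matrix_vector_mult_add_rdistrib matrix_vector_mul_assoc[symmetric])
  have Iinj: "(mat 1 + (?B ** matrix_inv R ** transpose ?B) ** ?P) *v y = 0 \<Longrightarrow> y = 0" for y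
  proof -
    assume "(mat 1 + (?B ** matrix_inv R ** transpose ?B) ** ?P) *v y = 0"
    then have e: "y + ?B *v (Ri *v (transpose ?B *v (?P *v y))) = 0" unfolding Iv .
    have y: "y = - (?B *v (Ri *v (transpose ?B *v (?P *v y))))" (is "y = - (?B *v ?r)")
      using eq_neg_iff_add_eq_0[THEN iffD2, OF e] .
    have "y \<bullet> (?P *v y) = (- (?B *v ?r)) \<bullet> (?P *v y)"
      using arg_cong[where f="\<lambda>z. z \<bullet> (?P *v y)", OF y] by (simp only:)
    also have "\<dots> = - ((?B *v ?r) \<bullet> (?P *v y))" by (rule inner_minus_left)
    also have "\<dots> = - (?r \<bullet> (transpose ?B *v (?P *v y)))" by (simp add: dot_transpose dot_vmul)
    also have "\<dots> = - (?r \<bullet> (R *v ?r))" by (simp add: Ri)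
    finally have "y \<bullet> (?P *v y) \<le> 0" using Rnn[of ?r] by simp
    then show "y = 0" using assms(7) unfolding pd_def by (meson not_less)
  qed
  note Ii = inv_of_inj[of "mat 1 + (?B ** matrix_inv R ** transpose ?B) ** ?P", OF Iinj, folded X_def]
  have wood: "?P *v (X *v z) = ?P *v z - ?P *v (?B *v (matrix_inv M *v (transpose ?B *v (?P *v z))))" for z
  proof -
    define y where "y = X *v z"
    define r where "r = Ri *v (transpose ?B *v (?P *v y))"
    have z: "z = y + ?B *v r" using Ii(2)[where x=z] by (simp add: Iv y_def r_def)
    have Rr: "R *v r = transpose ?B *v (?P *v y)" by (simp add: r_def Ri)
    have "M *v r = transpose ?B *v (?P *v z)"
      by (simp add: Mv Rr z matrix_vector_right_distrib)
    then have h: "matrix_inv M *v (transpose ?B *v (?P *v z)) = r" by (metis Mi(1))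
    have "?P *v z = ?P *v y + ?P *v (?B *v r)"
      by (subst z) (simp add: matrix_vector_right_distrib)
    then show ?thesis unfolding h y_def[symmetric] by simp
  qed
  have ric: "?P *v v = transpose ?A *v (?P *v (X *v (?A *v v))) + Q *v v" for v
  proof -
    have "?P *v v = riccati Q R ?A ?B ?P *v v" using arg_cong[OF assms(8), of "\<lambda>N. N *v v"] .
    then show ?thesis
      by (simp add: riccati_def X_def matrix_vector_mult_add_rdistrib matrix_vector_mul_assoc[symmetric])
  qed
  have Ru: "R *v (K *v v) = transpose ?B *v (?P *v (?A *v v - ?B *v (K *v v)))" for v
  proof -
    have "M *v (K *v v) = transpose ?B *v (?P *v (?A *v v))" by (simp add: Kv Mi)
    then show ?thesis by (simp add: Mv matrix_vector_mult_diff_distrib algebra_simps)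
  qed
  have Pv: "?P *v v = transpose ?A *v (?P *v (?A *v v - ?B *v (K *v v))) + Q *v v" for v
    using ric[of v] by (simp add: wood Kv' matrix_vector_mult_diff_distrib)
  have quad: "v \<bullet> (?P *v v) = v \<bullet> (Q *v v) + (K *v v) \<bullet> (R *v (K *v v))
      + (?A *v v - ?B *v (K *v v)) \<bullet> (?P *v (?A *v v - ?B *v (K *v v)))" for v
  proof -
    let ?u = "K *v v" and ?l = "?A *v v - ?B *v (K *v v)"
    have "v \<bullet> (?P *v v) = (?A *v v) \<bullet> (?P *v ?l) + v \<bullet> (Q *v v)"
      by (simp add: Pv[of v] inner_add_right dot_transpose dot_vmul)
    also have "(?A *v v) \<bullet> (?P *v ?l) = ?l \<bullet> (?P *v ?l) + (?B *v ?u) \<bullet> (?P *v ?l)"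
      by (simp add: inner_diff_left)
    also have "(?B *v ?u) \<bullet> (?P *v ?l) = ?u \<bullet> (R *v ?u)"
      by (simp add: Ru dot_transpose dot_vmul)
    finally show ?thesis by simp
  qed
  define p where "p = spec_norm ?P"
  define s where "s = sqrt p"
  have p0: "0 \<le> p" by (simp add: p_def spec_nonneg)
  have s0: "0 \<le> s" by (simp add: s_def p0)
  have ss: "s * s = p" using p0 by (simp add: s_def)
  have Pup: "v \<bullet> (?P *v v) \<le> p * norm v ^ 2" for v
  proof -
    have "v \<bullet> (?P *v v) \<le> norm v * norm (?P *v v)" by (rule norm_cauchy_schwarz)
    also have "\<dots> \<le> norm v * (p * norm v)" by (simp add: mult_left_mono p_def spec_bound)
    finally show ?thesis by (simp add: power2_eq_square algebra_simps)
  qed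
  have Qge: "v \<bullet> v \<le> v \<bullet> (Q *v v)" for v using psd_I[OF assms(4)] .
  have Pge: "norm v ^ 2 \<le> v \<bullet> (?P *v v)" for v
    using quad[of v] Qge[of v] Rnn[of "K *v v"] Pnn[of "?A *v v - ?B *v (K *v v)"]
      power2_norm_eq_inner[of v] by linarith
  have ub: "norm (K *v v) \<le> s * norm v" for v
  proof (rule sqb[OF _ s0])
    show "norm (K *v v) ^ 2 \<le> s * s * norm v ^ 2"
      unfolding ss using quad[of v] Qge[of v] Rpos[of "K *v v"] Pnn[of "?A *v v - ?B *v (K *v v)"] Pup[of v]
        inner_ge_zero[of v] power2_norm_eq_inner[of "K *v v"]
      by linarith
  qed
  have lb: "norm (?A *v v - ?B *v (K *v v)) \<le> s * norm v" for v
  proof (rule sqb[OF _ s0])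
    show "norm (?A *v v - ?B *v (K *v v)) ^ 2 \<le> s * s * norm v ^ 2"
      unfolding ss using quad[of v] Qge[of v] Rnn[of "K *v v"] Pge[of "?A *v v - ?B *v (K *v v)"] Pup[of v]
        inner_ge_zero[of v]
      by linarith
  qed
  define em where "em = eps_m"
  define e where "e = eps"
  define U where "U = Ups"
  define C where "C = U^2 * (s + 1) * (3 * em + 4 * e)"
  have emA: "spec_norm (?Ah - ?A) \<le> em" and emB: "spec_norm (?Bh - ?B) \<le> em"
    using assms(9) by (auto simp: em_def)
  have eF: "spec_norm (F - ?P) \<le> e" using assms(11) by (simp add: e_def)
  have em0: "0 \<le> em" using emA spec_nonneg[of "?Ah - ?A"] by linarith
  have e0: "0 \<le> e" using eF spec_nonneg[of "F - ?P"] by linarith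
  have BU: "spec_norm ?B \<le> U" and pU: "p \<le> U" and U1: "1 \<le> U" and emU: "em \<le> U" and eU: "e \<le> U"
    using assms(13-16) by (auto simp: U_def p_def em_def e_def)
  have sig: "1 \<le> sigma_min R" using sigma_min_props(2)[OF assms(3,5)] .
  have main: "norm ((Kh - K) *v v) \<le> C / sigma_min R * norm v" for v
  proof -
    define u where "u = K *v v"
    define l where "l = ?A *v v - ?B *v u"
    define lh where "lh = ?Ah *v v - ?Bh *v u"
    define d where "d = Kh *v v - u"
    have nu: "norm u \<le> s * norm v" using ub[of v] by (simp add: u_def)
    have nl: "norm l \<le> s * norm v" using lb[of v] by (simp add: u_def l_def)
    have Mhd: "Mh *v d = transpose ?Bh *v (F *v lh) - transpose ?B *v (?P *v l)"
    proof -
      have "Mh *v (Kh *v v) = transpose ?Bh *v (F *v (?Ah *v v))" by (simp add: Khv Mhi)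
      moreover have "Mh *v u = transpose ?B *v (?P *v l) + transpose ?Bh *v (F *v (?Bh *v u))"
        using Ru[of v] by (simp add: Mhv u_def l_def)
      ultimately show ?thesis
        by (simp add: d_def lh_def matrix_vector_mult_diff_distrib algebra_simps)
    qed
    have dec: "transpose ?Bh *v (F *v lh) - transpose ?B *v (?P *v l) =
       transpose (?Bh - ?B) *v (F *v lh) + transpose ?B *v ((F - ?P) *v lh) + transpose ?B *v (?P *v (lh - l))"
      by (simp only: transpose_diff matrix_vector_mult_diff_rdistrib matrix_vector_mult_diff_distrib) simp
    have dl: "lh - l = (?Ah - ?A) *v v - (?Bh - ?B) *v u"
      by (simp add: lh_def l_def matrix_vector_mult_diff_rdistrib)
    have n1: "norm ((?Ah - ?A) *v v) \<le> em * norm v"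
      using spec_bound[of "?Ah - ?A" v] emA by (meson mult_right_mono norm_ge_zero order_trans)
    have n2: "norm ((?Bh - ?B) *v u) \<le> em * (s * norm v)"
    proof -
      have "norm ((?Bh - ?B) *v u) \<le> spec_norm (?Bh - ?B) * norm u" by (rule spec_bound)
      also have "\<dots> \<le> em * (s * norm v)" using emB nu em0 spec_nonneg[of "?Bh - ?B"]
        by (intro mult_mono) auto
      finally show ?thesis .
    qed
    have ndl: "norm (lh - l) \<le> (em + em * s) * norm v"
    proof -
      have "norm (lh - l) \<le> norm ((?Ah - ?A) *v v) + norm ((?Bh - ?B) *v u)"
        unfolding dl by (rule norm_triangle_ineq4)
      then show ?thesis using n1 n2 by (simp add: algebra_simps)
    qed
    have nlh: "norm lh \<le> (s + (em + em * s)) * norm v"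
    proof -
      have "norm lh \<le> norm l + norm (lh - l)" by (rule norm_triangle_sub)
      then show ?thesis using ndl nl by (simp add: algebra_simps)
    qed
    have nvs: "0 \<le> (s + (em + em * s)) * norm v" using s0 em0 by simp
    have nFP: "norm ((F - ?P) *v lh) \<le> e * norm lh"
      using spec_bound[of "F - ?P" lh] eF by (meson mult_right_mono norm_ge_zero order_trans)
    have nF: "norm (F *v lh) \<le> (p + e) * norm lh"
    proof -
      have "F *v lh = ?P *v lh + (F - ?P) *v lh" by (simp add: matrix_vector_mult_diff_rdistrib)
      then have "norm (F *v lh) \<le> norm (?P *v lh) + norm ((F - ?P) *v lh)" by (metis norm_triangle_ineq)
      also have "\<dots> \<le> p * norm lh + e * norm lh" using spec_bound[of ?P lh] nFP by (simp add: p_def)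
      finally show ?thesis by (simp add: algebra_simps)
    qed
    have T1: "norm (transpose (?Bh - ?B) *v (F *v lh)) \<le> em * (p + e) * ((s + (em + em * s)) * norm v)"
    proof -
      have "norm (transpose (?Bh - ?B) *v (F *v lh)) \<le> spec_norm (?Bh - ?B) * norm (F *v lh)"
        by (rule transpose_bound)
      also have "\<dots> \<le> em * ((p + e) * norm lh)" using emB nF spec_nonneg[of "?Bh - ?B"]
        by (intro mult_mono) auto
      also have "\<dots> \<le> em * ((p + e) * ((s + (em + em * s)) * norm v))" using nlh em0 p0 e0
        by (intro mult_left_mono) auto
      finally show ?thesis by (simp add: algebra_simps)
    qed
    have T2: "norm (transpose ?B *v ((F - ?P) *v lh)) \<le> U * e * ((s + (em + em * s)) * norm v)"
    proof -
      have "norm (transpose ?B *v ((F - ?P) *v lh)) \<le> spec_norm ?B * norm ((F - ?P) *v lh)"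
        by (rule transpose_bound)
      also have "\<dots> \<le> U * (e * norm lh)" using BU nFP spec_nonneg[of ?B] U1
        by (intro mult_mono) auto
      also have "\<dots> \<le> U * (e * ((s + (em + em * s)) * norm v))" using nlh U1 e0
        by (intro mult_left_mono) auto
      finally show ?thesis by (simp add: algebra_simps)
    qed
    have T3: "norm (transpose ?B *v (?P *v (lh - l))) \<le> U * p * ((em + em * s) * norm v)"
    proof -
      have "norm (transpose ?B *v (?P *v (lh - l))) \<le> spec_norm ?B * norm (?P *v (lh - l))"
        by (rule transpose_bound)
      also have "\<dots> \<le> U * (p * norm (lh - l))" using BU spec_bound[of ?P "lh - l"] spec_nonneg[of ?B] U1
        by (intro mult_mono) (auto simp: p_def)
      also have "\<dots> \<le> U * (p * ((em + em * s) * norm v))" using ndl U1 p0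
        by (intro mult_left_mono) auto
      finally show ?thesis by (simp add: algebra_simps)
    qed
    have "norm (Mh *v d) \<le> em * (p + e) * ((s + (em + em * s)) * norm v) + U * e * ((s + (em + em * s)) * norm v)
        + U * p * ((em + em * s) * norm v)"
      unfolding Mhd dec using T1 T2 T3 norm_triangle_ineq
      by (smt (verit, ccfv_threshold))
    also have "\<dots> = (em*(p+e)*(s+(em+em * s)) + U*e*(s+(em+em * s)) + U*p*(em+em * s)) * norm v"
      by (simp add: algebra_simps)
    also have "\<dots> \<le> C * norm v" unfolding C_def
      using final_ineq[OF p0 pU e0 eU em0 emU U1 s0] by (simp add: mult_right_mono)
    finally have NM: "norm (Mh *v d) \<le> C * norm v" .
    have "sigma_min R * norm d ^ 2 \<le> d \<bullet> (R *v d)" by (rule sigma_min_props(1)[OF assms(3,5)])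
    also have "\<dots> \<le> d \<bullet> (Mh *v d)"
      using Fnn[of "?Bh *v d"] by (simp add: Mhv inner_add_right dot_vmul)
    also have "\<dots> \<le> norm d * norm (Mh *v d)" by (rule norm_cauchy_schwarz)
    finally have "sigma_min R * norm d * norm d \<le> norm (Mh *v d) * norm d"
      by (simp add: power2_eq_square algebra_simps)
    then have "sigma_min R * norm d \<le> norm (Mh *v d)"
      by (cases "norm d = 0") (use sig in auto)
    then have "sigma_min R * norm d \<le> C * norm v" using NM by linarith
    then have "norm d \<le> C * norm v / sigma_min R" using sig by (simp add: pos_le_divide_eq mult.commute)
    then show ?thesis by (simp add: d_def u_def matrix_vector_mult_diff_rdistrib)
  qed
  have "spec_norm (Kh - K) \<le> C / sigma_min R"
    unfolding spec_norm_def by (rule onorm_le) (rule main)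
  then show ?thesis by (simp add: Kh_def K_def C_def s_def p_def U_def em_def e_def)
qed

end
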